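(* Let $c>0$, $0<\lambda\le T_M$, and let $f\in C^2(\mathbb R)$ solve $$f''(y)-cf'(y)-f^4(y)=-\int_{-\infty}^\infty E(y-\eta)f^4(\eta)\,d\eta\ (y\in\mathbb R),\qquad 0<\lambda\le f\le T_M.$$ Then $f$ does not attain its infimum at $+\infty$, i.e. $\liminf_{y\to\infty}f(y)>\inf_{\mathbb R}f$, unless $f$ is constant.
   Context: $E(x)=\frac12\int_{|x|}^\infty\frac{e^{-t}}{t}dt$. *)

theory Defs
  imports "HOL-Analysis.Analysis"
begin

definition E :: "real \<Rightarrow> real" where
  "E x = (1/2) * integral {\<bar>x\<bar>..} (\<lambda>t. exp (- t) / t)"

end

theory Submission
  imports Defs
begin


lemma tonelli_HK:
  fixes h :: "real \<Rightarrow> real \<Rightarrow> real"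
  assumes meas[measurable]: "(\<lambda>(s,t). h s t) \<in> borel_measurable (lborel \<Otimes>\<^sub>M lborel)"
   and nn: "\<And>s t. s \<in> A \<Longrightarrow> t \<in> B \<Longrightarrow> 0 \<le> h s t"
   and A[measurable]: "A \<in> sets lborel" and B[measurable]: "B \<in> sets lborel"
   and i1: "\<And>s. s \<in> A \<Longrightarrow> h s integrable_on B"
   and i2: "(\<lambda>s. integral B (h s)) integrable_on A"
   and i3: "\<And>t. t \<in> B \<Longrightarrow> (\<lambda>s. h s t) integrable_on A"
   and i4: "(\<lambda>t. integral A (\<lambda>s. h s t)) integrable_on B"
  shows "integral A (\<lambda>s. integral B (h s)) = integral B (\<lambda>t. integral A (\<lambda>s. h s t))"
proof -
  have p1: "ennreal (indicator A s * integral B (h s)) = (\<integral>\<^sup>+t. ennreal (indicator A s * indicator B t * h s t) \<partial>lborel)" for s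
  proof (cases "s \<in> A")
    case True
    have "(\<integral>\<^sup>+t. ennreal (indicator B t * h s t) \<partial>lborel) = ennreal (integral B (h s))"
      using nn_integral_has_integral_lebesgue[of B "h s" "integral B (h s)"] i1[OF True] nn[OF True] by auto
    then show ?thesis using True by simp
  qed simp
  have p2: "ennreal (indicator B t * integral A (\<lambda>s. h s t)) = (\<integral>\<^sup>+s. ennreal (indicator A s * indicator B t * h s t) \<partial>lborel)" for t
  proof (cases "t \<in> B")
    case True
    have "(\<integral>\<^sup>+s. ennreal (indicator A s * h s t) \<partial>lborel) = ennreal (integral A (\<lambda>s. h s t))"
      using nn_integral_has_integral_lebesgue[of A "\<lambda>s. h s t" "integral A (\<lambda>s. h s t)"] i3[OF True] nn True by auto
    then show ?thesis using True by (simp add: mult.commute)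
  qed simp
  have n1: "0 \<le> integral A (\<lambda>s. integral B (h s))"
    by (rule integral_nonneg[OF i2]) (auto intro!: integral_nonneg i1 nn)
  have n2: "0 \<le> integral B (\<lambda>t. integral A (\<lambda>s. h s t))"
    by (rule integral_nonneg[OF i4]) (auto intro!: integral_nonneg i3 nn)
  have eqL: "(\<integral>\<^sup>+s. ennreal (indicator A s * integral B (h s)) \<partial>lborel) = ennreal (integral A (\<lambda>s. integral B (h s)))"
    by (rule nn_integral_has_integral_lebesgue[OF _ integrable_integral[OF i2]])
      (auto intro!: integral_nonneg i1 nn)
  have eqR: "(\<integral>\<^sup>+t. ennreal (indicator B t * integral A (\<lambda>s. h s t)) \<partial>lborel) = ennreal (integral B (\<lambda>t. integral A (\<lambda>s. h s t)))"
    by (rule nn_integral_has_integral_lebesgue[OF _ integrable_integral[OF i4]])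
      (auto intro!: integral_nonneg i3 nn)
  have "ennreal (integral A (\<lambda>s. integral B (h s))) = (\<integral>\<^sup>+s. ennreal (indicator A s * integral B (h s)) \<partial>lborel)"
    using eqL by simp
  also have "\<dots> = (\<integral>\<^sup>+s. \<integral>\<^sup>+t. ennreal (indicator A s * indicator B t * h s t) \<partial>lborel \<partial>lborel)"
    using p1 by simp
  also have "\<dots> = (\<integral>\<^sup>+t. \<integral>\<^sup>+s. ennreal (indicator A s * indicator B t * h s t) \<partial>lborel \<partial>lborel)"
    by (rule lborel_pair.Fubini'[symmetric]) measurable
  also have "\<dots> = (\<integral>\<^sup>+t. ennreal (indicator B t * integral A (\<lambda>s. h s t)) \<partial>lborel)"
    using p2 by simp
  also have "\<dots> = ennreal (integral B (\<lambda>t. integral A (\<lambda>s. h s t)))"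
    using eqR by simp
  finally show ?thesis using n1 n2 by simp
qed

lemma global_antideriv:
  fixes h :: "real \<Rightarrow> real"
  assumes "continuous_on UNIV h"
  shows "\<exists>H. \<forall>x. (H has_real_derivative h x) (at x)"
proof -
  define H where "H x = integral {0..x} h - integral {x..0} h" for x
  have comb: "H x - H a = integral {a..x} h" if ax: "a \<le> x" for a x
  proof -
    have int: "h integrable_on {p..q}" for p q
      by (rule integrable_continuous_interval) (auto intro: continuous_on_subset[OF assms])
    have z1: "integral {0..y} h = 0" if "y \<le> 0" for y
      using that by (cases "y = 0") auto
    have z2: "integral {y..0} h = 0" if "0 \<le> y" for y
      using that by (cases "y = 0") auto
    consider "a \<le> x" "x \<le> 0" | "a \<le> 0" "0 \<le> x" | "0 \<le> a" "a \<le> x" using ax by (cases "x \<le> 0"; cases "a \<le> 0") auto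
    then show ?thesis
    proof cases
      case 1
      then have "integral {a..x} h + integral {x..0} h = integral {a..0} h"
        by (rule Henstock_Kurzweil_Integration.integral_combine) (auto intro: int)
      then show ?thesis using 1 z1 by (simp add: H_def)
    next
      case 2
      then have "integral {a..0} h + integral {0..x} h = integral {a..x} h"
        by (rule Henstock_Kurzweil_Integration.integral_combine) (auto intro: int)
      then show ?thesis using 2 z1 z2 by (simp add: H_def)
    next
      case 3
      then have "integral {0..a} h + integral {a..x} h = integral {0..x} h"
        by (rule Henstock_Kurzweil_Integration.integral_combine) (auto intro: int)
      then show ?thesis using 3 z2 by (simp add: H_def)
    qed
  qed
  have "(H has_real_derivative h x) (at x)" for x
  proof -
    have d: "((\<lambda>u. integral {x-1..u} h) has_real_derivative h x) (at x within {x-1..x+1})"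
      by (rule integral_has_real_derivative) (auto intro: continuous_on_subset[OF assms])
    have d2: "((\<lambda>u. integral {x-1..u} h) has_real_derivative h x) (at x)"
      using d by (simp add: at_within_Icc_at)
    show ?thesis
    proof (rule has_field_derivative_transform_within_open[where S="{x-1<..<x+1}" and f="\<lambda>u. integral {x-1..u} h + H (x-1)"])
      show "((\<lambda>u. integral {x-1..u} h + H (x-1)) has_real_derivative h x) (at x)"
        using d2 by (auto intro!: derivative_eq_intros)
      fix u assume "u \<in> {x-1<..<x+1}"
      then show "integral {x-1..u} h + H (x-1) = H u"
        using comb[of "x-1" u] by simp
    qed auto
  qed
  then show ?thesis by blast
qed

lemma mono_deriv:
  fixes h h' :: "real \<Rightarrow> real"
  assumes "a \<le> b" "\<And>u. a \<le> u \<Longrightarrow> u \<le> b \<Longrightarrow> (h has_real_derivative h' u) (at u)"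
    "\<And>u. a \<le> u \<Longrightarrow> u \<le> b \<Longrightarrow> 0 \<le> h' u"
  shows "h a \<le> h b"
  using assms by (intro DERIV_nonneg_imp_nondecreasing[OF assms(1)]) blast

lemma ftc_real:
  fixes F f :: "real \<Rightarrow> real"
  assumes "a \<le> b" "\<And>x. (F has_real_derivative f x) (at x)"
  shows "(f has_integral (F b - F a)) {a..b}"
  by (rule fundamental_theorem_of_calculus[OF assms(1)])
     (auto simp flip: has_real_derivative_iff_has_vector_derivative intro: has_field_derivative_at_within assms(2))

lemma borel_lebesgue_on:
  fixes f :: "real \<Rightarrow> real"
  shows "f \<in> borel_measurable borel \<Longrightarrow> f \<in> borel_measurable (lebesgue_on S)"
  by (simp add: measurable_completion measurable_restrict_space1)

lemma integrable_by_bound: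
  fixes f g :: "real \<Rightarrow> real"
  assumes "f \<in> borel_measurable borel" "g integrable_on S" "S \<in> sets lebesgue"
    "\<And>x. x \<in> S \<Longrightarrow> \<bar>f x\<bar> \<le> g x"
  shows "f integrable_on S"
  using measurable_bounded_by_integrable_imp_integrable[OF borel_lebesgue_on[OF assms(1)] assms(2) _ assms(3)] assms(4)
  by auto

lemma exp_integrable: "(\<lambda>t. C * exp (- t)) integrable_on {c::real..}"
  using integrable_on_cmult_left[OF integrable_on_exp_minus_to_infinity[of 1 c], of C] by simp

lemma exp_has_integral: "((\<lambda>t. exp (- t)) has_integral exp (-c)) {c::real..}"
  using has_integral_exp_minus_to_infinity[of 1 c] by simp

lemma avg_bounds:
  fixes w W :: "real \<Rightarrow> real"
  assumes Wd: "\<And>x. (W has_real_derivative w x) (at x)" and wb: "\<And>x. 0 \<le> w x" "\<And>x. w x \<le> B"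
    and t: "0 \<le> t"
  shows "0 \<le> (W (y+t) - W (y-t)) / (2*t)" "(W (y+t) - W (y-t)) / (2*t) \<le> B"
proof -
  have d: "((\<lambda>u. W (y+u) - W (y-u)) has_real_derivative (w (y+u) + w (y-u))) (at u)" for u
    by (auto intro!: derivative_eq_intros DERIV_chain2[OF Wd])
  have "(\<lambda>u. W (y+u) - W (y-u)) 0 \<le> (\<lambda>u. W (y+u) - W (y-u)) t"
    by (rule mono_deriv[OF t d]) (auto intro: add_nonneg_nonneg wb)
  then have a: "0 \<le> W (y+t) - W (y-t)" by simp
  have d2: "((\<lambda>u. 2*B*u - (W (y+u) - W (y-u))) has_real_derivative (2*B - (w (y+u) + w (y-u)))) (at u)" for u
    by (auto intro!: derivative_eq_intros DERIV_chain2[OF Wd])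
  have "(\<lambda>u. 2*B*u - (W (y+u) - W (y-u))) 0 \<le> (\<lambda>u. 2*B*u - (W (y+u) - W (y-u))) t"
    by (rule mono_deriv[OF t d2]) (use wb in \<open>auto intro: add_mono[of _ B _ B, simplified]\<close>)
  then have b: "W (y+t) - W (y-t) \<le> 2*B*t" by simp
  show "0 \<le> (W (y+t) - W (y-t)) / (2*t)" using a t by simp
  show "(W (y+t) - W (y-t)) / (2*t) \<le> B"
  proof (cases "t = 0")
    case True then show ?thesis using wb(1)[of 0] wb(2)[of 0] by simp
  next
    case False then show ?thesis using b t by (simp add: divide_le_eq mult_ac)
  qed
qed



definition kk :: "real \<Rightarrow> real" where "kk t = exp (-t) / t"

lemma kk_integrable: "r > 0 \<Longrightarrow> kk integrable_on {r..}"
proof -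
  assume r: "r > 0"
  show ?thesis
  proof (rule integrable_by_bound[where g="\<lambda>t. (1/r) * exp (-t)"])
    show "kk \<in> borel_measurable borel" unfolding kk_def by measurable
    show "(\<lambda>t. (1/r) * exp (-t)) integrable_on {r..}" by (rule exp_integrable)
    show "{r..} \<in> sets lebesgue" by simp
    fix t assume "t \<in> {r..}"
    then show "\<bar>kk t\<bar> \<le> 1/r * exp (-t)" using r
      by (auto simp: kk_def divide_simps mult_left_mono)
  qed
qed

lemma kk_nn: "x \<noteq> 0 \<Longrightarrow> (\<integral>\<^sup>+t. ennreal (if \<bar>x\<bar> \<le> t then kk t else 0) \<partial>lborel) = ennreal (integral {\<bar>x\<bar>..} kk)"
proof -
  assume x: "x \<noteq> 0"
  have "(\<integral>\<^sup>+t. ennreal (indicator {\<bar>x\<bar>..} t * kk t) \<partial>lborel) = ennreal (integral {\<bar>x\<bar>..} kk)"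
    by (rule nn_integral_has_integral_lebesgue[OF _ integrable_integral[OF kk_integrable]])
      (use x in \<open>auto simp: kk_def\<close>)
  moreover have "(\<lambda>t. ennreal (indicator {\<bar>x\<bar>..} t * kk t)) = (\<lambda>t. ennreal (if \<bar>x\<bar> \<le> t then kk t else 0))"
    by (auto simp: indicator_def)
  ultimately show ?thesis by simp
qed

definition Ek :: "real \<Rightarrow> real" where
  "Ek x = (1/2) * enn2real (\<integral>\<^sup>+t. ennreal (if \<bar>x\<bar> \<le> t then kk t else 0) \<partial>lborel)"

lemma E_Ek: "x \<noteq> 0 \<Longrightarrow> E x = Ek x"
proof -
  assume x: "x \<noteq> 0"
  have "0 \<le> integral {\<bar>x\<bar>..} kk"
    by (rule integral_nonneg[OF kk_integrable]) (use x in \<open>auto simp: kk_def\<close>)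
  moreover have "E x = 1/2 * integral {\<bar>x\<bar>..} kk" by (simp add: E_def kk_def[abs_def])
  ultimately show ?thesis by (simp add: Ek_def kk_nn[OF x])
qed

lemma Ek_meas[measurable]: "Ek \<in> borel_measurable borel"
  unfolding Ek_def kk_def by measurable

lemma Ek_nonneg: "0 \<le> Ek x"
  by (simp add: Ek_def)

lemma deriv_meas:
  fixes W w :: "real \<Rightarrow> real"
  assumes "\<And>x. (W has_real_derivative w x) (at x)"
  shows "W \<in> borel_measurable borel"
  by (rule borel_measurable_continuous_onI)
     (auto intro!: continuous_at_imp_continuous_on DERIV_isCont assms)

lemma conv_E:
  fixes w W :: "real \<Rightarrow> real"
  assumes wm[measurable]: "w \<in> borel_measurable borel"
   and Wd: "\<And>x. (W has_real_derivative w x) (at x)" and wb: "\<And>x. 0 \<le> w x" "\<And>x. w x \<le> B"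
  shows "integral UNIV (\<lambda>\<eta>. E (y - \<eta>) * w \<eta>) = integral {0..} (\<lambda>t. exp (-t) * ((W (y+t) - W (y-t)) / (2*t)))"
proof -
  define M where "M t = (W (y+t) - W (y-t)) / (2*t)" for t
  have Wm[measurable]: "W \<in> borel_measurable borel" by (rule deriv_meas[OF Wd])
  have Mb: "0 \<le> M t" "M t \<le> B" if "0 \<le> t" for t
    using avg_bounds[OF Wd wb that] by (auto simp: M_def)
  have int: "(\<lambda>t. exp(-t) * M t) integrable_on {0..}"
  proof (rule integrable_by_bound[where g="\<lambda>t. B * exp (-t)"])
    show "(\<lambda>t. exp (- t) * M t) \<in> borel_measurable borel" unfolding M_def by measurable
    show "(\<lambda>t. B * exp (- t)) integrable_on {0..}" by (rule exp_integrable)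
  qed (use Mb in \<open>auto simp: abs_mult\<close>)
  define P where "P = integral {0..} (\<lambda>t. exp(-t) * M t)"
  have P0: "0 \<le> P" unfolding P_def by (rule integral_nonneg[OF int]) (use Mb in auto)
  have nP: "(\<integral>\<^sup>+t. ennreal (indicator {0..} t * (exp(-t) * M t)) \<partial>lborel) = ennreal P"
    unfolding P_def by (rule nn_integral_has_integral_lebesgue[OF _ integrable_integral[OF int]]) (use Mb in auto)
  have inner: "(\<integral>\<^sup>+\<eta>. ennreal ((if \<bar>y - \<eta>\<bar> \<le> t then kk t else 0) / 2 * w \<eta>) \<partial>lborel)
      = ennreal (indicator {0..} t * (exp(-t) * M t))" for t
  proof (cases "t \<le> 0")
    case True
    have "(if \<bar>y - \<eta>\<bar> \<le> t then kk t else 0) = 0" for \<eta>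
      using True by (auto simp: kk_def)
    then show ?thesis using True by (cases "t = 0") (auto simp: M_def)
  next
    case False
    have "ennreal ((if \<bar>y - \<eta>\<bar> \<le> t then kk t else 0) / 2 * w \<eta>)
       = ennreal (kk t / 2) * ennreal (indicator {y-t..y+t} \<eta> * w \<eta>)" for \<eta>
      using False by (auto simp: indicator_def kk_def ennreal_mult'[symmetric] abs_le_iff)
    then have "(\<integral>\<^sup>+\<eta>. ennreal ((if \<bar>y - \<eta>\<bar> \<le> t then kk t else 0) / 2 * w \<eta>) \<partial>lborel)
        = ennreal (kk t / 2) * (\<integral>\<^sup>+\<eta>. ennreal (indicator {y-t..y+t} \<eta> * w \<eta>) \<partial>lborel)"
      by (simp add: nn_integral_cmult)
    also have "(\<integral>\<^sup>+\<eta>. ennreal (indicator {y-t..y+t} \<eta> * w \<eta>) \<partial>lborel) = ennreal (W (y+t) - W (y-t))"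
      by (rule nn_integral_has_integral_lebesgue[OF _ ftc_real[OF _ Wd]]) (use False wb in auto)
    also have "ennreal (kk t / 2) * ennreal (W (y+t) - W (y-t)) = ennreal (kk t / 2 * (W (y+t) - W (y-t)))"
      using False by (simp add: ennreal_mult'[symmetric] kk_def)
    also have "kk t / 2 * (W (y+t) - W (y-t)) = indicator {0..} t * (exp(-t) * M t)"
      using False by (simp add: kk_def M_def)
    finally show ?thesis .
  qed
  have outer: "ennreal (Ek (y - \<eta>) * w \<eta>) = (\<integral>\<^sup>+t. ennreal ((if \<bar>y - \<eta>\<bar> \<le> t then kk t else 0) / 2 * w \<eta>) \<partial>lborel)"
    if "\<eta> \<noteq> y" for \<eta>
  proof -
    have ne: "y - \<eta> \<noteq> 0" using that by simp
    have I0: "0 \<le> integral {\<bar>y - \<eta>\<bar>..} kk"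
      by (rule integral_nonneg[OF kk_integrable]) (use ne in \<open>auto simp: kk_def\<close>)
    have "(\<integral>\<^sup>+t. ennreal ((if \<bar>y - \<eta>\<bar> \<le> t then kk t else 0) / 2 * w \<eta>) \<partial>lborel)
       = (\<integral>\<^sup>+t. ennreal (if \<bar>y - \<eta>\<bar> \<le> t then kk t else 0) * ennreal (w \<eta> / 2) \<partial>lborel)"
      by (intro nn_integral_cong) (auto simp: ennreal_mult'[symmetric] wb kk_def)
    also have "\<dots> = (\<integral>\<^sup>+t. ennreal (if \<bar>y - \<eta>\<bar> \<le> t then kk t else 0) \<partial>lborel) * ennreal (w \<eta> / 2)"
      by (rule nn_integral_multc) (unfold kk_def, measurable)
    also have "\<dots> = ennreal (integral {\<bar>y - \<eta>\<bar>..} kk * (w \<eta> / 2))"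
      using kk_nn[OF ne] I0 by (simp add: ennreal_mult'[symmetric] wb)
    also have "integral {\<bar>y - \<eta>\<bar>..} kk * (w \<eta> / 2) = Ek (y - \<eta>) * w \<eta>"
      using kk_nn[OF ne] I0 by (simp add: Ek_def)
    finally show ?thesis by simp
  qed
  have "(\<integral>\<^sup>+\<eta>. ennreal (Ek (y - \<eta>) * w \<eta>) \<partial>lborel)
      = (\<integral>\<^sup>+\<eta>. \<integral>\<^sup>+t. ennreal ((if \<bar>y - \<eta>\<bar> \<le> t then kk t else 0) / 2 * w \<eta>) \<partial>lborel \<partial>lborel)"
    by (rule nn_integral_cong_AE) (use AE_lborel_singleton[of y] outer in \<open>auto elim!: eventually_mono\<close>)
  also have "\<dots> = (\<integral>\<^sup>+t. \<integral>\<^sup>+\<eta>. ennreal ((if \<bar>y - \<eta>\<bar> \<le> t then kk t else 0) / 2 * w \<eta>) \<partial>lborel \<partial>lborel)"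
    by (rule lborel_pair.Fubini'[symmetric]) (unfold kk_def, measurable)
  also have "\<dots> = ennreal P" using inner nP by simp
  finally have nn: "(\<integral>\<^sup>+\<eta>. ennreal (Ek (y - \<eta>) * w \<eta>) \<partial>lborel) = ennreal P" .
  have hi: "((\<lambda>\<eta>. Ek (y - \<eta>) * w \<eta>) has_integral P) UNIV"
    by (rule nn_integral_has_integral[OF _ _ nn P0]) (auto intro: mult_nonneg_nonneg Ek_nonneg wb)
  have "integral UNIV (\<lambda>\<eta>. E (y - \<eta>) * w \<eta>) = integral UNIV (\<lambda>\<eta>. Ek (y - \<eta>) * w \<eta>)"
    by (rule integral_spike[where S="{y}"]) (auto simp: E_Ek)
  also have "\<dots> = P" using hi by (rule integral_unique)
  finally show ?thesis by (simp add: P_def M_def)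
qed



lemma nonneg2:
  fixes h hd hdd :: "real \<Rightarrow> real"
  assumes t: "0 \<le> t" and z: "h 0 = 0" "hd 0 = 0"
    and d: "\<And>u. 0 \<le> u \<Longrightarrow> u \<le> t \<Longrightarrow> (h has_real_derivative hd u) (at u)"
    and d1: "\<And>u. 0 \<le> u \<Longrightarrow> u \<le> t \<Longrightarrow> (hd has_real_derivative hdd u) (at u)"
    and p: "\<And>u. 0 \<le> u \<Longrightarrow> u \<le> t \<Longrightarrow> 0 \<le> hdd u"
  shows "0 \<le> h t"
proof -
  have "0 \<le> hd u" if "0 \<le> u" "u \<le> t" for u
    using mono_deriv[of 0 u hd hdd] that d1 p z by auto
  then show ?thesis using mono_deriv[of 0 t h hd] t d z by auto
qed

lemma nonneg3:
  fixes h hd hdd hddd :: "real \<Rightarrow> real"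
  assumes t: "0 \<le> t" and z: "h 0 = 0" "hd 0 = 0" "hdd 0 = 0"
    and d: "\<And>u. 0 \<le> u \<Longrightarrow> u \<le> t \<Longrightarrow> (h has_real_derivative hd u) (at u)"
    and d1: "\<And>u. 0 \<le> u \<Longrightarrow> u \<le> t \<Longrightarrow> (hd has_real_derivative hdd u) (at u)"
    and d2: "\<And>u. 0 \<le> u \<Longrightarrow> u \<le> t \<Longrightarrow> (hdd has_real_derivative hddd u) (at u)"
    and p: "\<And>u. 0 \<le> u \<Longrightarrow> u \<le> t \<Longrightarrow> 0 \<le> hddd u"
  shows "0 \<le> h t"
proof -
  have "0 \<le> hd u" if "0 \<le> u" "u \<le> t" for u
    using nonneg2[of u hd hdd hddd] that d1 d2 p z by auto
  then show ?thesis using mono_deriv[of 0 t h hd] t d z by auto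
qed

lemma mono_deriv_neg:
  fixes h h' :: "real \<Rightarrow> real"
  assumes "a \<le> b" "\<And>u. a \<le> u \<Longrightarrow> u \<le> b \<Longrightarrow> (h has_real_derivative h' u) (at u)"
    "\<And>u. a \<le> u \<Longrightarrow> u \<le> b \<Longrightarrow> h' u \<le> 0"
  shows "h b \<le> h a"
  using mono_deriv[of a b "\<lambda>x. - h x" "\<lambda>x. - h' x"] assms
  by (auto intro!: derivative_eq_intros)


lemma poly_exp:
  fixes t :: real assumes "0 \<le> t"
  shows "t \<le> 16 * exp (t/2)" "t^2 \<le> 16 * exp (t/2)" "t^3 \<le> 216 * exp (t/2)"
proof -
  have e1: "x \<le> exp x" for x :: real using exp_ge_add_one_self[of x] by linarith
  have "t/2 \<le> exp (t/2)" by (rule e1)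
  moreover have "0 < exp (t/2)" by simp
  ultimately show "t \<le> 16 * exp (t/2)" by linarith
  have "(t/4)^2 \<le> exp (t/4) ^ 2" using assms e1[of "t/4"] by (intro power_mono) auto
  also have "exp (t/4) ^ 2 = exp (t/2)" by (simp add: power2_eq_square exp_add[symmetric])
  finally show "t^2 \<le> 16 * exp (t/2)" by (simp add: power_divide)
  have "(t/6)^3 \<le> exp (t/6) ^ 3" using assms e1[of "t/6"] by (intro power_mono) auto
  also have "exp (t/6) ^ 3 = exp (t/2)" by (simp add: power3_eq_cube exp_add[symmetric])
  finally show "t^3 \<le> 216 * exp (t/2)" by (simp add: power_divide)
qed

lemma exp_half_has_integral: "((\<lambda>t. C * exp (- t / 2)) has_integral (2 * C)) {0::real..}"
  using has_integral_mult_right[OF has_integral_exp_minus_to_infinity[of "1/2" 0], of C] by (simp add: mult.commute)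



locale L3 =
  fixes f f' f'' :: "real \<Rightarrow> real" and c lam T_M :: real
  assumes c_pos: "c > 0"
    and lam: "0 < lam" "lam \<le> T_M"
    and d1: "\<And>y. (f has_real_derivative f' y) (at y)"
    and d2: "\<And>y. (f' has_real_derivative f'' y) (at y)"
    and cont2: "continuous_on UNIV f''"
    and eq: "\<And>y. f'' y - c * f' y - (f y) ^ 4
                 = - integral UNIV (\<lambda>\<eta>. E (y - \<eta>) * (f \<eta>) ^ 4)"
    and bounds: "\<And>y. lam \<le> f y \<and> f y \<le> T_M"
begin

definition m where "m = Inf (range f)"
definition S where "S = T_M ^ 4"
definition K where "K = 4 * T_M ^ 3"
definition v where "v y = f y ^ 4 - m ^ 4" for y

lemma f_cont: "continuous_on UNIV f"
  by (auto intro!: continuous_at_imp_continuous_on DERIV_isCont d1)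
lemma f'_cont: "continuous_on UNIV f'"
  by (auto intro!: continuous_at_imp_continuous_on DERIV_isCont d2)

lemma m_le: "m \<le> f y"
proof -
  have "bdd_below (range f)" unfolding bdd_below_def using bounds by blast
  then show ?thesis unfolding m_def by (rule cInf_lower[rotated]) simp
qed
lemma m_ge: "lam \<le> m"
  unfolding m_def using bounds by (intro cInf_greatest) auto
lemma m_pos: "0 < m" using m_ge lam by simp
lemma T_pos: "0 < T_M" using lam by simp
lemma S_pos: "0 < S" using T_pos by (simp add: S_def)
lemma K_pos: "0 < K" using T_pos by (simp add: K_def)

lemma f_nonneg: "0 \<le> f y" using bounds[of y] lam by linarith
lemma f4_le: "f y ^ 4 \<le> S"
  unfolding S_def using bounds[of y] f_nonneg[of y] by (simp add: power_mono)

lemma v_nonneg: "0 \<le> v y"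
  unfolding v_def using m_le[of y] m_pos by (simp add: power_mono)
lemma v_le_S: "v y \<le> S"
  unfolding v_def using f4_le[of y] m_pos zero_le_power[of m 4] by linarith
lemma v_cont: "continuous_on UNIV v"
  unfolding v_def by (intro continuous_intros f_cont)
lemma v_meas[measurable]: "v \<in> borel_measurable borel"
  by (rule borel_measurable_continuous_onI[OF v_cont])

lemma v_le_Kg: "v y \<le> K * (f y - m)"
proof -
  have fy: "m \<le> f y" "f y \<le> T_M" using m_le bounds by auto
  have "v y = (f y - m) * (f y ^ 3 + f y ^ 2 * m + f y * m ^ 2 + m ^ 3)"
    unfolding v_def by (simp add: algebra_simps power2_eq_square power3_eq_cube power4_eq_xxxx)
  also have "\<dots> \<le> (f y - m) * (4 * T_M ^ 3)"
  proof (rule mult_left_mono)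
    have a: "f y ^ 3 \<le> T_M ^ 3" using fy m_pos by (intro power_mono) auto
    have b: "f y ^ 2 * m \<le> T_M ^ 2 * T_M" using fy m_pos
      by (intro mult_mono power_mono) auto
    have c: "f y * m ^ 2 \<le> T_M * T_M ^ 2" using fy m_pos
      by (intro mult_mono power_mono) auto
    have d: "m ^ 3 \<le> T_M ^ 3" using fy m_pos by (intro power_mono) auto
    show "f y ^ 3 + f y ^ 2 * m + f y * m ^ 2 + m ^ 3 \<le> 4 * T_M ^ 3"
      using a b c d by (simp add: power3_eq_cube power2_eq_square)
  qed (use fy in auto)
  finally show ?thesis by (simp add: K_def mult.commute)
qed

definition V1 where "V1 = (SOME H. \<forall>x. (H has_real_derivative v x) (at x))"
lemma V1d: "(V1 has_real_derivative v x) (at x)"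
  using someI_ex[OF global_antideriv[OF v_cont]] unfolding V1_def by blast
lemma V1_cont: "continuous_on UNIV V1"
  by (auto intro!: continuous_at_imp_continuous_on DERIV_isCont V1d)
definition V2 where "V2 = (SOME H. \<forall>x. (H has_real_derivative V1 x) (at x))"
lemma V2d: "(V2 has_real_derivative V1 x) (at x)"
  using someI_ex[OF global_antideriv[OF V1_cont]] unfolding V2_def by blast
lemma V2_cont: "continuous_on UNIV V2"
  by (auto intro!: continuous_at_imp_continuous_on DERIV_isCont V2d)
definition V3 where "V3 = (SOME H. \<forall>x. (H has_real_derivative V2 x) (at x))"
lemma V3d: "(V3 has_real_derivative V2 x) (at x)"
  using someI_ex[OF global_antideriv[OF V2_cont]] unfolding V3_def by blast
lemma V3_cont: "continuous_on UNIV V3"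
  by (auto intro!: continuous_at_imp_continuous_on DERIV_isCont V3d)
lemma V_meas[measurable]: "V1 \<in> borel_measurable borel" "V2 \<in> borel_measurable borel" "V3 \<in> borel_measurable borel"
  by (auto intro: borel_measurable_continuous_onI V1_cont V2_cont V3_cont)

definition M where "M t y = (V1 (y+t) - V1 (y-t)) / (2*t)" for t y
definition J where "J y = integral {0..} (\<lambda>t. exp (-t) * M t y)" for y

lemma M_bounds: "0 \<le> t \<Longrightarrow> 0 \<le> M t y" "0 \<le> t \<Longrightarrow> M t y \<le> S"
  using avg_bounds[OF V1d v_nonneg v_le_S] by (auto simp: M_def)

lemma M_int: "(\<lambda>t. exp (-t) * M t y) integrable_on {0..}"
proof (rule integrable_by_bound[where g="\<lambda>t. S * exp (-t)"])
  show "(\<lambda>t. exp (- t) * M t y) \<in> borel_measurable borel" unfolding M_def by measurable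
  show "(\<lambda>t. S * exp (- t)) integrable_on {0..}" by (rule exp_integrable)
qed (use M_bounds in \<open>auto simp: abs_mult\<close>)

lemma J_bounds: "0 \<le> J y" "J y \<le> S"
proof -
  show "0 \<le> J y" unfolding J_def by (rule integral_nonneg[OF M_int]) (use M_bounds in auto)
  have "J y \<le> integral {0..} (\<lambda>t. S * exp (-t))" unfolding J_def
    by (rule integral_le[OF M_int exp_integrable]) (use M_bounds in auto)
  also have "\<dots> = S" using integral_unique[OF has_integral_mult_right[OF exp_has_integral[of 0], of S]] by simp
  finally show "J y \<le> S" .
qed

lemma eq2: "f'' y - c * f' y = v y - J y"
proof -
  define W where "W x = V1 x + m ^ 4 * x" for x
  have Wd: "(W has_real_derivative (f x ^ 4)) (at x)" for x
    unfolding W_def using V1d[of x] by (auto intro!: derivative_eq_intros simp: v_def)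
  have wm: "(\<lambda>x. f x ^ 4) \<in> borel_measurable borel"
    by (intro borel_measurable_continuous_onI continuous_intros f_cont)
  have "integral UNIV (\<lambda>\<eta>. E (y - \<eta>) * f \<eta> ^ 4) = integral {0..} (\<lambda>t. exp (-t) * ((W (y+t) - W (y-t)) / (2*t)))"
    by (rule conv_E[OF wm Wd, of S]) (auto intro: f4_le)
  also have "\<dots> = integral {0..} (\<lambda>t. exp (-t) * M t y + m ^ 4 * exp (-t))"
    by (rule integral_spike[where S="{0}"]) (auto simp: W_def M_def field_simps)
  also have "\<dots> = J y + m ^ 4"
    using integral_unique[OF has_integral_add[OF integrable_integral[OF M_int] has_integral_mult_right[OF exp_has_integral[of 0], of "m^4"]]]
    by (simp add: J_def)
  finally show ?thesis using eq[of y] by (simp add: v_def)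
qed


lemma rhs_bound: "\<bar>f'' y - c * f' y\<bar> \<le> S"
  using eq2[of y] v_nonneg[of y] v_le_S[of y] J_bounds[of y] by linarith

lemma rb1: "0 \<le> f'' u - c * f' u + S" using rhs_bound[of u] by linarith
lemma rb2: "f'' u - c * f' u - S \<le> 0" using rhs_bound[of u] by linarith

lemma f'_bound: "\<bar>f' y0\<bar> \<le> S / c"
proof (rule ccontr)
  assume "\<not> ?thesis"
  then consider "f' y0 > S / c" | "f' y0 < - (S / c)" by linarith
  then show False
  proof cases
    case 1
    define d0 where "d0 = f' y0 - S / c"
    have d0: "d0 > 0" using 1 by (simp add: d0_def)
    define D where "D y = exp (-c * (y - y0)) * (f' y - S / c)" for y
    have Dd: "(D has_real_derivative exp (-c * (y - y0)) * (f'' y - c * f' y + S)) (at y)" for y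
      unfolding D_def using c_pos
      by (auto intro!: derivative_eq_intros d2 simp: algebra_simps)
    have f'lb: "f' y \<ge> d0" if "y0 \<le> y" for y
    proof -
      have "D y0 \<le> D y"
        by (rule mono_deriv[OF that Dd]) (auto intro!: mult_nonneg_nonneg rb1)
      then have a: "d0 \<le> exp (-c * (y - y0)) * (f' y - S / c)" by (simp add: D_def d0_def)
      have e: "exp (-c * (y - y0)) \<le> 1" "0 < exp (-c * (y - y0))" using that c_pos by auto
      have "f' y - S / c \<ge> d0"
      proof (rule ccontr)
        assume "\<not> f' y - S / c \<ge> d0"
        then have X: "f' y - S / c < d0" by simp
        have "exp (-c * (y - y0)) * (f' y - S / c) < d0"
        proof (cases "f' y - S / c \<le> 0")
          case True
          then have "exp (-c * (y - y0)) * (f' y - S / c) \<le> 0" using e by (simp add: mult_nonneg_nonpos)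
          then show ?thesis using d0 by linarith
        next
          case False
          then have "exp (-c * (y - y0)) * (f' y - S / c) \<le> 1 * (f' y - S / c)" using e
            by (intro mult_right_mono) auto
          then show ?thesis using X by simp
        qed
        then show False using a by simp
      qed
      moreover have "S / c > 0" using S_pos c_pos by simp
      ultimately show ?thesis by linarith
    qed
    define n where "n = T_M / d0 + 1"
    have "T_M / d0 > 0" using d0 T_pos by simp
    then have n: "n > 0" unfolding n_def by linarith
    have "f y0 - d0 * y0 \<le> f (y0 + n) - d0 * (y0 + n)"
      by (rule mono_deriv[where h'="\<lambda>y. f' y - d0"]) (use n f'lb in \<open>auto intro!: derivative_eq_intros d1\<close>)
    moreover have "d0 * n = T_M + d0" using d0 by (simp add: n_def field_simps)
    ultimately have "f (y0 + n) \<ge> f y0 + T_M + d0" by (simp add: algebra_simps)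
    then show False using bounds[of "y0+n"] f_nonneg[of y0] d0 by linarith
  next
    case 2
    define d0 where "d0 = f' y0 + S / c"
    have d0: "d0 < 0" using 2 by (simp add: d0_def)
    define D where "D y = exp (-c * (y - y0)) * (f' y + S / c)" for y
    have Dd: "(D has_real_derivative exp (-c * (y - y0)) * (f'' y - c * f' y - S)) (at y)" for y
      unfolding D_def using c_pos
      by (auto intro!: derivative_eq_intros d2 simp: algebra_simps)
    have f'ub: "f' y \<le> d0" if "y0 \<le> y" for y
    proof -
      have "D y \<le> D y0"
        by (rule mono_deriv_neg[OF that Dd]) (auto intro!: mult_nonneg_nonpos rb2)
      then have a: "exp (-c * (y - y0)) * (f' y + S / c) \<le> d0" by (simp add: D_def d0_def)
      have e: "exp (-c * (y - y0)) \<le> 1" "0 < exp (-c * (y - y0))" using that c_pos by auto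
      have "f' y + S / c \<le> d0"
      proof (rule ccontr)
        assume "\<not> f' y + S / c \<le> d0"
        then have "f' y + S / c > d0" by simp
        then have p1: "exp (-c * (y - y0)) * d0 < exp (-c * (y - y0)) * (f' y + S / c)"
          by (rule mult_strict_left_mono) (use e in auto)
        have p2: "1 * d0 \<le> exp (-c * (y - y0)) * d0" using e d0
          by (intro mult_right_mono_neg) auto
        show False using a p1 p2 by linarith
      qed
      moreover have "S / c > 0" using S_pos c_pos by simp
      ultimately show ?thesis by linarith
    qed
    define n where "n = T_M / (- d0) + 1"
    have "T_M / (-d0) > 0" using d0 T_pos by (intro divide_pos_pos) auto
    then have n: "n > 0" unfolding n_def by linarith
    have "f (y0 + n) - d0 * (y0 + n) \<le> f y0 - d0 * y0"
      by (rule mono_deriv_neg[where h'="\<lambda>y. f' y - d0"]) (use n f'ub in \<open>auto intro!: derivative_eq_intros d1\<close>)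
    moreover have "d0 * n = - T_M + d0" using d0 by (simp add: n_def field_simps)
    ultimately have "f (y0 + n) \<le> f y0 - T_M + d0" by (simp add: algebra_simps)
    then show False using bounds[of "y0+n"] bounds[of y0] f_nonneg[of "y0+n"] d0 by linarith
  qed
qed

lemma f''_bound: "\<bar>f'' y\<bar> \<le> 2 * S"
proof -
  have "\<bar>c * f' y\<bar> \<le> S" using f'_bound[of y] c_pos by (simp add: abs_mult field_simps)
  then show ?thesis using rhs_bound[of y] by linarith
qed


lemma taylor_ub: "f (Y + h) \<le> f Y + f' Y * h + 2 * S * h ^ 2"
proof (cases "0 \<le> h")
  case True
  have "0 \<le> (\<lambda>u. f Y + f' Y * u + 2 * S * u ^ 2 - f (Y + u)) h"
  proof (rule nonneg2[where t=h and h="\<lambda>u. f Y + f' Y * u + 2 * S * u ^ 2 - f (Y + u)" and hd="\<lambda>u. f' Y + 4 * S * u - f' (Y + u)" and hdd="\<lambda>u. 4 * S - f'' (Y + u)"])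
    fix u
    show "((\<lambda>u. f Y + f' Y * u + 2 * S * u\<^sup>2 - f (Y + u)) has_real_derivative f' Y + 4 * S * u - f' (Y + u)) (at u)"
      by (auto intro!: derivative_eq_intros DERIV_chain2[OF d1])
    show "((\<lambda>u. f' Y + 4 * S * u - f' (Y + u)) has_real_derivative 4 * S - f'' (Y + u)) (at u)"
      by (auto intro!: derivative_eq_intros DERIV_chain2[OF d2])
    show "0 \<le> 4 * S - f'' (Y + u)" using f''_bound[of "Y+u"] by linarith
  qed (use True in auto)
  then show ?thesis by simp
next
  case False
  have "0 \<le> (\<lambda>u. f Y - f' Y * u + 2 * S * u ^ 2 - f (Y - u)) (-h)"
  proof (rule nonneg2[where t="-h" and h="\<lambda>u. f Y - f' Y * u + 2 * S * u ^ 2 - f (Y - u)" and hd="\<lambda>u. - f' Y + 4 * S * u + f' (Y - u)" and hdd="\<lambda>u. 4 * S - f'' (Y - u)"])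
    fix u
    show "((\<lambda>u. f Y - f' Y * u + 2 * S * u\<^sup>2 - f (Y - u)) has_real_derivative - f' Y + 4 * S * u + f' (Y - u)) (at u)"
      by (auto intro!: derivative_eq_intros DERIV_chain2[OF d1])
    show "((\<lambda>u. - f' Y + 4 * S * u + f' (Y - u)) has_real_derivative 4 * S - f'' (Y - u)) (at u)"
      by (auto intro!: derivative_eq_intros DERIV_chain2[OF d2])
    show "0 \<le> 4 * S - f'' (Y - u)" using f''_bound[of "Y-u"] by linarith
  qed (use False in auto)
  then show ?thesis by simp
qed

lemma deriv_small: "f' Y ^ 2 \<le> 8 * S * (f Y - m)"
proof -
  define h where "h = - f' Y / (4 * S)"
  have "m \<le> f (Y + h)" by (rule m_le)
  also have "\<dots> \<le> f Y + f' Y * h + 2 * S * h ^ 2" by (rule taylor_ub)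
  finally have "m \<le> f Y + f' Y * h + 2 * S * h ^ 2" .
  moreover have "f' Y * h + 2 * S * h ^ 2 = (- (f' Y ^ 2)) / (8 * S)"
    using S_pos by (simp add: h_def field_simps power2_eq_square)
  ultimately have "f' Y ^ 2 / (8 * S) \<le> f Y - m" by simp
  then show ?thesis using S_pos by (simp add: field_simps)
qed

definition mu_p where "mu_p = (c + sqrt (c^2 + 4*K)) / 2"
definition mu_m where "mu_m = (c - sqrt (c^2 + 4*K)) / 2"

lemma mu_facts: "mu_p + mu_m = c" "mu_p * mu_m = - K" "mu_m < 0" "- mu_m \<le> mu_p" "0 < mu_p"
proof -
  have sq: "sqrt (c^2 + 4*K) ^ 2 = c^2 + 4*K" using K_pos c_pos by simp
  have "sqrt (c^2) < sqrt (c^2 + 4*K)" by (rule real_sqrt_less_mono) (use K_pos in simp)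
  then have gt: "sqrt (c^2 + 4*K) > c" using c_pos by simp
  show "mu_p + mu_m = c" by (simp add: mu_p_def mu_m_def field_simps)
  have "mu_p * mu_m = (c^2 - sqrt (c^2 + 4*K) ^ 2) / 4"
    unfolding mu_p_def mu_m_def by (simp add: field_simps power2_eq_square)
  then show "mu_p * mu_m = - K" using sq by simp
  show "mu_m < 0" using gt by (simp add: mu_m_def)
  have "mu_p + mu_m = c" by (simp add: mu_p_def mu_m_def field_simps)
  then show "- mu_m \<le> mu_p" using c_pos by linarith
  show "0 < mu_p" using c_pos K_pos by (simp add: mu_p_def add_pos_nonneg)
qed

lemma key_ineq: "f'' z - c * f' z - K * (f z - m) \<le> 0"
  using eq2[of z] J_bounds[of z] v_le_Kg[of z] by linarith

lemma exp_div_le: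
  fixes X a u :: real
  assumes "exp (- u) * X \<le> a"
  shows "X \<le> a * exp u"
proof -
  have "X = exp u * (exp (- u) * X)" by (simp add: exp_minus field_simps)
  also have "\<dots> \<le> exp u * a" using assms by (intro mult_left_mono) auto
  finally show ?thesis by (simp add: mult.commute)
qed

lemma exp_div_ge:
  fixes X a u :: real
  assumes "a \<le> exp (- u) * X"
  shows "a * exp u \<le> X"
proof -
  have "a * exp u \<le> exp u * (exp (- u) * X)" using assms by (simp add: mult.commute mult_left_mono)
  also have "\<dots> = X" by (simp add: exp_minus field_simps)
  finally show ?thesis .
qed

lemma window:
  assumes R: "0 \<le> R" and y: "Y - R \<le> y" "y \<le> Y + R"
  shows "f y - m \<le> (f Y - m) + R * exp (mu_p * R) * (\<bar>f' Y\<bar> + mu_p * (f Y - m))"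
proof -
  define a0 where "a0 = \<bar>f' Y\<bar> + mu_p * (f Y - m)"
  define d where "d = exp (mu_p * R) * a0"
  have g0: "0 \<le> f z - m" for z using m_le[of z] by simp
  have a0: "0 \<le> a0" unfolding a0_def using mu_facts g0[of Y] by simp
  have d0: "0 \<le> d" unfolding d_def using a0 by simp
  have comb: "f'' z - (mu_p + mu_m) * f' z + mu_p * mu_m * (f z - m) \<le> 0" for z
    using key_ineq[of z] mu_facts by simp
  show ?thesis
  proof (cases "Y \<le> y")
    case True
    define P where "P z = exp (- (mu_p * (z - Y))) * (f' z - mu_m * (f z - m))" for z
    have Pd: "(P has_real_derivative exp (- (mu_p * (z - Y))) * (f'' z - (mu_p + mu_m) * f' z + mu_p * mu_m * (f z - m))) (at z)" for z
      unfolding P_def by (auto intro!: derivative_eq_intros d1 d2 simp: algebra_simps)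
    have fd: "f' z \<le> d" if "Y \<le> z" "z \<le> y" for z
    proof -
      have "P z \<le> P Y"
        by (rule mono_deriv_neg[OF that(1) Pd]) (auto intro!: mult_nonneg_nonpos comb)
      also have "P Y \<le> a0"
      proof -
        have "- mu_m * (f Y - m) \<le> mu_p * (f Y - m)"
          by (rule mult_right_mono) (use mu_facts g0[of Y] in auto)
        then show ?thesis unfolding P_def a0_def by simp
      qed
      finally have "f' z - mu_m * (f z - m) \<le> a0 * exp (mu_p * (z - Y))"
        unfolding P_def by (rule exp_div_le)
      also have "\<dots> \<le> d" unfolding d_def using a0 that y mu_facts
        by (simp add: mult.commute mult_left_mono)
      moreover have "mu_m * (f z - m) \<le> 0"
        using mu_facts g0[of z] by (intro mult_nonpos_nonneg) auto
      ultimately show ?thesis by linarith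
    qed
    have "f y - d * y \<le> f Y - d * Y"
      by (rule mono_deriv_neg[OF True, where h'="\<lambda>z. f' z - d"]) (use fd in \<open>auto intro!: derivative_eq_intros d1\<close>)
    then have "f y - m \<le> (f Y - m) + d * (y - Y)" by (simp add: algebra_simps)
    also have "d * (y - Y) \<le> d * R" using d0 y by (intro mult_left_mono) auto
    finally show ?thesis by (simp add: d_def a0_def mult_ac)
  next
    case False
    define P where "P z = exp (- (mu_m * (z - Y))) * (f' z - mu_p * (f z - m))" for z
    have Pd: "(P has_real_derivative exp (- (mu_m * (z - Y))) * (f'' z - (mu_p + mu_m) * f' z + mu_p * mu_m * (f z - m))) (at z)" for z
      unfolding P_def by (auto intro!: derivative_eq_intros d1 d2 simp: algebra_simps)
    have fd: "- d \<le> f' z" if "y \<le> z" "z \<le> Y" for z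
    proof -
      have "- a0 \<le> P Y" unfolding P_def a0_def by simp
      also have "P Y \<le> P z"
        by (rule mono_deriv_neg[OF that(2) Pd]) (auto intro!: mult_nonneg_nonpos comb)
      finally have "- a0 * exp (mu_m * (z - Y)) \<le> f' z - mu_p * (f z - m)"
        unfolding P_def by (rule exp_div_ge)
      moreover have "exp (mu_m * (z - Y)) \<le> exp (mu_p * R)"
      proof -
        have "mu_m * (z - Y) = (- mu_m) * (Y - z)" by (simp add: algebra_simps)
        also have "\<dots> \<le> mu_p * (Y - z)" by (rule mult_right_mono) (use mu_facts that in auto)
        also have "\<dots> \<le> mu_p * R" by (rule mult_left_mono) (use mu_facts that y in auto)
        finally show ?thesis by simp
      qed
      then have "a0 * exp (mu_m * (z - Y)) \<le> a0 * exp (mu_p * R)"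
        by (rule mult_left_mono) (use a0 in auto)
      then have "- d \<le> - a0 * exp (mu_m * (z - Y))" unfolding d_def by (simp add: mult.commute)
      moreover have "0 \<le> mu_p * (f z - m)"
        using mu_facts g0[of z] by (intro mult_nonneg_nonneg) auto
      ultimately show ?thesis by linarith
    qed
    have "f y + d * y \<le> f Y + d * Y"
      by (rule mono_deriv[where a=y and b=Y and h="\<lambda>z. f z + d * z" and h'="\<lambda>z. f' z + d", simplified]) (use False in \<open>auto intro!: derivative_eq_intros d1 dest!: fd\<close>)
    then have "f y - m \<le> (f Y - m) + d * (Y - y)" by (simp add: algebra_simps)
    also have "d * (Y - y) \<le> d * R" using d0 y by (intro mult_left_mono) auto
    finally show ?thesis by (simp add: d_def a0_def mult_ac)
  qed
qed


definition Gm where "Gm t y = (V2 (y+t) - V2 (y-t) - 2*t*V1 y) / (2*t)" for t y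
definition Lm where "Lm t y = (V3 (y+t) - V3 (y-t) - 2*t*V2 y) / (2*t)" for t y

lemma Lm_bounds:
  assumes t: "0 \<le> t" and Bw: "\<And>u. y - t \<le> u \<Longrightarrow> u \<le> y + t \<Longrightarrow> v u \<le> Bw"
  shows "0 \<le> Lm t y" "Lm t y \<le> Bw * t^2"
proof -
  define \<phi> where "\<phi> u = V3 (y+u) - V3 (y-u) - 2*u*V2 y" for u
  have d1: "(\<phi> has_real_derivative (V2 (y+u) + V2 (y-u) - 2 * V2 y)) (at u)" for u
    unfolding \<phi>_def by (auto intro!: derivative_eq_intros DERIV_chain2[OF V3d])
  have d2: "((\<lambda>u. V2 (y+u) + V2 (y-u) - 2 * V2 y) has_real_derivative (V1 (y+u) - V1 (y-u))) (at u)" for u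
    by (auto intro!: derivative_eq_intros DERIV_chain2[OF V2d])
  have d3: "((\<lambda>u. V1 (y+u) - V1 (y-u)) has_real_derivative (v (y+u) + v (y-u))) (at u)" for u
    by (auto intro!: derivative_eq_intros DERIV_chain2[OF V1d])
  have p0: "0 \<le> \<phi> t"
    by (rule nonneg3[OF t _ _ _ d1 d2 d3]) (auto simp: \<phi>_def intro: add_nonneg_nonneg v_nonneg)
  have Bw0: "0 \<le> Bw" using Bw[of y] v_nonneg[of y] t by simp
  have p1: "0 \<le> (\<lambda>u. Bw * u^3 / 3 - \<phi> u) t"
  proof (rule nonneg3[where h="\<lambda>u. Bw * u^3 / 3 - \<phi> u" and hd="\<lambda>u. Bw * u^2 - (V2 (y+u) + V2 (y-u) - 2 * V2 y)"
        and hdd="\<lambda>u. 2 * Bw * u - (V1 (y+u) - V1 (y-u))" and hddd="\<lambda>u. 2 * Bw - (v (y+u) + v (y-u))"])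
    fix u
    show "((\<lambda>u. Bw * u^3 / 3 - \<phi> u) has_real_derivative Bw * u^2 - (V2 (y+u) + V2 (y-u) - 2 * V2 y)) (at u)"
      by (auto intro!: derivative_eq_intros d1 DERIV_chain2[OF V2d] DERIV_chain2[OF V3d] simp: power2_eq_square)
    show "((\<lambda>u. Bw * u^2 - (V2 (y+u) + V2 (y-u) - 2 * V2 y)) has_real_derivative 2 * Bw * u - (V1 (y+u) - V1 (y-u))) (at u)"
      by (auto intro!: derivative_eq_intros d2 DERIV_chain2[OF V1d] DERIV_chain2[OF V2d])
    show "((\<lambda>u. 2 * Bw * u - (V1 (y+u) - V1 (y-u))) has_real_derivative 2 * Bw - (v (y+u) + v (y-u))) (at u)"
      by (auto intro!: derivative_eq_intros d3 DERIV_chain2[OF V1d])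
    assume "0 \<le> u" "u \<le> t"
    then show "0 \<le> 2 * Bw - (v (y+u) + v (y-u))" using Bw[of "y+u"] Bw[of "y-u"] by auto
  qed (use t in \<open>auto simp: \<phi>_def\<close>)
  show "0 \<le> Lm t y" using p0 t by (simp add: Lm_def \<phi>_def[symmetric])
  show "Lm t y \<le> Bw * t^2"
  proof (cases "t = 0")
    case True then show ?thesis by (simp add: Lm_def)
  next
    case False
    have "\<phi> t \<le> Bw * t^3 / 3" using p1 by simp
    also have "\<dots> \<le> Bw * t^3 * 2" using Bw0 t by simp
    finally have "\<phi> t / (2*t) \<le> Bw * t^2" using False t by (simp add: divide_le_eq power3_eq_cube power2_eq_square mult_ac)
    then show ?thesis by (simp add: Lm_def \<phi>_def[symmetric])
  qed
qed

lemma Gm_bound: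
  assumes t: "0 \<le> t"
  shows "\<bar>Gm t y\<bar> \<le> S * t"
proof -
  define \<phi> where "\<phi> u = V2 (y+u) - V2 (y-u) - 2*u*V1 y" for u
  have d1: "(\<phi> has_real_derivative (V1 (y+u) + V1 (y-u) - 2 * V1 y)) (at u)" for u
    unfolding \<phi>_def by (auto intro!: derivative_eq_intros DERIV_chain2[OF V2d])
  have d2: "((\<lambda>u. V1 (y+u) + V1 (y-u) - 2 * V1 y) has_real_derivative (v (y+u) - v (y-u))) (at u)" for u
    by (auto intro!: derivative_eq_intros DERIV_chain2[OF V1d])
  have vb: "\<bar>v a - v b\<bar> \<le> S" for a b using v_nonneg[of a] v_nonneg[of b] v_le_S[of a] v_le_S[of b] by linarith
  have p1: "0 \<le> (\<lambda>u. S * u^2 - \<phi> u) t"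
  proof (rule nonneg2[where h="\<lambda>u. S * u^2 - \<phi> u" and hd="\<lambda>u. 2 * S * u - (V1 (y+u) + V1 (y-u) - 2 * V1 y)"
        and hdd="\<lambda>u. 2 * S - (v (y+u) - v (y-u))"])
    fix u
    show "((\<lambda>u. S * u^2 - \<phi> u) has_real_derivative 2 * S * u - (V1 (y+u) + V1 (y-u) - 2 * V1 y)) (at u)"
      by (auto intro!: derivative_eq_intros d1 DERIV_chain2[OF V1d] DERIV_chain2[OF V2d])
    show "((\<lambda>u. 2 * S * u - (V1 (y+u) + V1 (y-u) - 2 * V1 y)) has_real_derivative 2 * S - (v (y+u) - v (y-u))) (at u)"
      by (auto intro!: derivative_eq_intros d2 DERIV_chain2[OF V1d] DERIV_chain2[OF V2d])
    show "0 \<le> 2 * S - (v (y+u) - v (y-u))" using vb[of "y+u" "y-u"] S_pos by linarith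
  qed (use t in \<open>auto simp: \<phi>_def\<close>)
  have p2: "0 \<le> (\<lambda>u. S * u^2 + \<phi> u) t"
  proof (rule nonneg2[where h="\<lambda>u. S * u^2 + \<phi> u" and hd="\<lambda>u. 2 * S * u + (V1 (y+u) + V1 (y-u) - 2 * V1 y)"
        and hdd="\<lambda>u. 2 * S + (v (y+u) - v (y-u))"])
    fix u
    show "((\<lambda>u. S * u^2 + \<phi> u) has_real_derivative 2 * S * u + (V1 (y+u) + V1 (y-u) - 2 * V1 y)) (at u)"
      by (auto intro!: derivative_eq_intros d1 DERIV_chain2[OF V1d] DERIV_chain2[OF V2d])
    show "((\<lambda>u. 2 * S * u + (V1 (y+u) + V1 (y-u) - 2 * V1 y)) has_real_derivative 2 * S + (v (y+u) - v (y-u))) (at u)"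
      by (auto intro!: derivative_eq_intros d2 DERIV_chain2[OF V1d] DERIV_chain2[OF V2d])
    show "0 \<le> 2 * S + (v (y+u) - v (y-u))" using vb[of "y+u" "y-u"] S_pos by linarith
  qed (use t in \<open>auto simp: \<phi>_def\<close>)
  show ?thesis
  proof (cases "t = 0")
    case True then show ?thesis by (simp add: Gm_def)
  next
    case False
    have "\<bar>\<phi> t\<bar> \<le> S * t^2" using p1 p2 by simp
    then have "\<bar>\<phi> t\<bar> / (2*t) \<le> S * t^2 / (2*t)" using t by (simp add: divide_right_mono)
    also have "\<dots> \<le> S * t" using False t S_pos by (simp add: power2_eq_square field_simps)
    finally show ?thesis using t by (simp add: Gm_def \<phi>_def[symmetric] abs_div)
  qed
qed

lemma Lm_int: "(\<lambda>t. exp (-t) * Lm t y) integrable_on {0..}"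
proof (rule integrable_by_bound[where g="\<lambda>t. 16 * S * exp (- t / 2)"])
  show "(\<lambda>t. exp (- t) * Lm t y) \<in> borel_measurable borel" unfolding Lm_def by measurable
  show "(\<lambda>t. 16 * S * exp (- t / 2)) integrable_on {0..}" using exp_half_has_integral by blast
  fix t :: real assume "t \<in> {0..}"
  then have t: "0 \<le> t" by simp
  have "\<bar>exp (- t) * Lm t y\<bar> = exp (-t) * Lm t y" using Lm_bounds(1)[OF t, of y S] v_le_S by simp
  also have "\<dots> \<le> exp (-t) * (S * t^2)" using Lm_bounds(2)[OF t, of y S] v_le_S by simp
  also have "\<dots> \<le> exp (-t) * (S * (16 * exp (t/2)))"
    using poly_exp(2)[OF t] S_pos by (intro mult_left_mono) auto
  also have "\<dots> = 16 * S * (exp (-t) * exp (t/2))" by simp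
  also have "exp (-t) * exp (t/2) = exp (- t / 2)" by (simp add: exp_add[symmetric])
  finally show "\<bar>exp (- t) * Lm t y\<bar> \<le> 16 * S * exp (- t / 2)" .
qed (simp)

lemma Gm_int: "(\<lambda>t. exp (-t) * Gm t y) integrable_on {0..}"
proof (rule integrable_by_bound[where g="\<lambda>t. 16 * S * exp (- t / 2)"])
  show "(\<lambda>t. exp (- t) * Gm t y) \<in> borel_measurable borel" unfolding Gm_def by measurable
  show "(\<lambda>t. 16 * S * exp (- t / 2)) integrable_on {0..}" using exp_half_has_integral by blast
  fix t :: real assume "t \<in> {0..}"
  then have t: "0 \<le> t" by simp
  have "\<bar>exp (- t) * Gm t y\<bar> = exp (-t) * \<bar>Gm t y\<bar>" by (simp add: abs_mult)
  also have "\<dots> \<le> exp (-t) * (S * t)" using Gm_bound[OF t, of y] by simp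
  also have "\<dots> \<le> exp (-t) * (S * (16 * exp (t/2)))"
    using poly_exp(1)[OF t] S_pos by (intro mult_left_mono) auto
  also have "\<dots> = 16 * S * (exp (-t) * exp (t/2))" by simp
  also have "exp (-t) * exp (t/2) = exp (- t / 2)" by (simp add: exp_add[symmetric])
  finally show "\<bar>exp (- t) * Gm t y\<bar> \<le> 16 * S * exp (- t / 2)" .
qed (simp)

definition Gb where "Gb y = integral {0..} (\<lambda>t. exp (-t) * Gm t y)" for y
definition Lb where "Lb y = integral {0..} (\<lambda>t. exp (-t) * Lm t y)" for y

lemma Lb_nonneg: "0 \<le> Lb y"
  unfolding Lb_def by (rule integral_nonneg[OF Lm_int]) (use Lm_bounds(1)[of _ y S] v_le_S in auto)


lemma V1_comp[continuous_intros]: "continuous_on A g \<Longrightarrow> continuous_on A (\<lambda>x. V1 (g x))"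
  using continuous_on_compose2[OF V1_cont] by blast
lemma v_comp[continuous_intros]: "continuous_on A g \<Longrightarrow> continuous_on A (\<lambda>x. v (g x))"
  using continuous_on_compose2[OF v_cont] by blast
lemma f_comp[continuous_intros]: "continuous_on A g \<Longrightarrow> continuous_on A (\<lambda>x. f (g x))"
  using continuous_on_compose2[OF f_cont] by blast
lemma f'_comp[continuous_intros]: "continuous_on A g \<Longrightarrow> continuous_on A (\<lambda>x. f' (g x))"
  using continuous_on_compose2[OF f'_cont] by blast
lemma f''_comp[continuous_intros]: "continuous_on A g \<Longrightarrow> continuous_on A (\<lambda>x. f'' (g x))"
  using continuous_on_compose2[OF cont2] by blast

lemma Gm_deriv: "t \<noteq> 0 \<Longrightarrow> ((\<lambda>s. Gm t s) has_real_derivative (M t s - v s)) (at s)"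
  unfolding Gm_def M_def
  by (auto intro!: derivative_eq_intros DERIV_chain2[OF V2d] V1d simp: field_simps)

lemma Lm_deriv: "t \<noteq> 0 \<Longrightarrow> ((\<lambda>s. Lm t s) has_real_derivative (Gm t s)) (at s)"
  unfolding Gm_def Lm_def
  by (auto intro!: derivative_eq_intros DERIV_chain2[OF V3d] V2d simp: field_simps)

lemma weighted:
  assumes hab: "a \<le> b" and hrho: "\<And>x. a \<le> x \<Longrightarrow> x \<le> b \<Longrightarrow> 0 \<le> pp + qq * x"
  shows "integral {a..b} (\<lambda>x. (pp + qq * x) * J x) = integral {a..b} (\<lambda>x. (pp + qq * x) * v x)
           + ((pp + qq*b) * Gb b - qq * Lb b) - ((pp + qq*a) * Gb a - qq * Lb a)"
proof -
  define \<rho> where "\<rho> x = pp + qq * x" for x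
  define IV where "IV = integral {a..b} (\<lambda>s. \<rho> s * v s)"
  have vint: "((\<lambda>s. \<rho> s * v s) has_integral IV) {a..b}"
    unfolding IV_def \<rho>_def by (intro integrable_integral integrable_continuous_interval continuous_intros)
  have inner: "integral {a..b} (\<lambda>s. \<rho> s * (exp(-t) * M t s))
      = exp (-t) * IV + (\<rho> b * (exp (-t) * Gm t b) - qq * (exp (-t) * Lm t b)) - (\<rho> a * (exp (-t) * Gm t a) - qq * (exp (-t) * Lm t a))"
    if t: "t \<noteq> 0" for t
  proof -
    have "((\<lambda>s. \<rho> s * (M t s - v s)) has_integral
        ((\<rho> b * Gm t b - qq * Lm t b) - (\<rho> a * Gm t a - qq * Lm t a))) {a..b}"
      by (rule ftc_real[OF hab, where F="\<lambda>s. \<rho> s * Gm t s - qq * Lm t s"])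
         (auto intro!: derivative_eq_intros Gm_deriv[OF t] Lm_deriv[OF t] simp: \<rho>_def algebra_simps)
    from has_integral_add[OF this vint]
    have "((\<lambda>s. \<rho> s * M t s) has_integral ((\<rho> b * Gm t b - qq * Lm t b) - (\<rho> a * Gm t a - qq * Lm t a) + IV)) {a..b}"
      by (simp add: algebra_simps)
    from has_integral_mult_right[OF this, of "exp (-t)"]
    show ?thesis by (intro integral_unique) (simp add: algebra_simps)
  qed
  define Val where "Val = IV + (\<rho> b * Gb b - qq * Lb b) - (\<rho> a * Gb a - qq * Lb a)"
  have Fint: "((\<lambda>t. exp (-t) * IV + (\<rho> b * (exp (-t) * Gm t b) - qq * (exp (-t) * Lm t b)) - (\<rho> a * (exp (-t) * Gm t a) - qq * (exp (-t) * Lm t a))) has_integral Val) {0..}"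
    unfolding Val_def Gb_def Lb_def
    by (intro has_integral_add has_integral_diff has_integral_mult_right integrable_integral Gm_int Lm_int
        has_integral_mult_left[OF exp_has_integral[of 0], of IV, simplified])
  have i4h: "((\<lambda>t. integral {a..b} (\<lambda>s. \<rho> s * (exp(-t) * M t s))) has_integral Val) {0..}"
    by (rule has_integral_spike[OF _ _ Fint, where S="{0}"]) (auto simp: inner)
  have Jc: "(\<lambda>s. v s - (f'' s - c * f' s)) = J" using eq2 by (auto simp: fun_eq_iff)
  have "integral {a..b} (\<lambda>s. integral {0..} (\<lambda>t. \<rho> s * (exp(-t) * M t s))) = integral {0..} (\<lambda>t. integral {a..b} (\<lambda>s. \<rho> s * (exp(-t) * M t s)))"
  proof (rule tonelli_HK)
    show "(\<lambda>(s, t). \<rho> s * (exp (- t) * M t s)) \<in> borel_measurable (lborel \<Otimes>\<^sub>M lborel)"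
      unfolding \<rho>_def M_def by measurable
    show "0 \<le> \<rho> s * (exp (- t) * M t s)" if "s \<in> {a..b}" "t \<in> {0..}" for s t
      using that hrho M_bounds(1)[of t s] by (auto simp: \<rho>_def intro!: mult_nonneg_nonneg)
    show "(\<lambda>t. \<rho> s * (exp (- t) * M t s)) integrable_on {0..}" for s
      using has_integral_mult_right[OF integrable_integral[OF M_int[of s]], of "\<rho> s"] by blast
    have "(\<lambda>s. integral {0..} (\<lambda>t. \<rho> s * (exp (- t) * M t s))) = (\<lambda>s. \<rho> s * (v s - (f'' s - c * f' s)))"
    proof -
      have Jx: "integral {0..} (\<lambda>t. exp (- t) * M t x) = v x - (f'' x - c * f' x)" for x
        using eq2[of x] unfolding J_def by linarith
      show ?thesis by (auto simp: fun_eq_iff Jx)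
    qed
    then show "(\<lambda>s. integral {0..} (\<lambda>t. \<rho> s * (exp (- t) * M t s))) integrable_on {a..b}"
      unfolding \<rho>_def by (auto intro!: integrable_continuous_interval continuous_intros)
    show "(\<lambda>s. \<rho> s * (exp (- t) * M t s)) integrable_on {a..b}" for t
      by (cases "t = 0") (auto simp: \<rho>_def M_def intro!: integrable_continuous_interval continuous_intros)
    show "(\<lambda>t. integral {a..b} (\<lambda>s. \<rho> s * (exp (- t) * M t s))) integrable_on {0..}"
      using i4h by blast
  qed auto
  moreover have "integral {a..b} (\<lambda>s. integral {0..} (\<lambda>t. \<rho> s * (exp(-t) * M t s))) = integral {a..b} (\<lambda>s. \<rho> s * J s)"
    by (auto simp: J_def)
  moreover have "integral {0..} (\<lambda>t. integral {a..b} (\<lambda>s. \<rho> s * (exp(-t) * M t s))) = Val"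
    using i4h by (rule integral_unique)
  ultimately show ?thesis by (simp add: Val_def IV_def \<rho>_def)
qed


definition F0 where "F0 = (SOME H. \<forall>x. (H has_real_derivative f x) (at x))"
lemma F0d: "(F0 has_real_derivative f x) (at x)"
  using someI_ex[OF global_antideriv[OF f_cont]] unfolding F0_def by blast

definition Phi where "Phi x = f' x - c * f x + Gb x" for x
definition Psi where "Psi x = f x - c * F0 x + Lb x" for x

lemma ident:
  assumes hab: "a \<le> b" and hrho: "\<And>x. a \<le> x \<Longrightarrow> x \<le> b \<Longrightarrow> 0 \<le> pp + qq * x"
  shows "(pp + qq * b) * Phi b - qq * Psi b = (pp + qq * a) * Phi a - qq * Psi a"
proof -
  define N2 where "N2 x = (pp + qq * x) * (f' x - c * f x) - qq * (f x - c * F0 x)" for x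
  have Jx: "J x = v x - (f'' x - c * f' x)" for x using eq2[of x] by linarith
  have i1: "(\<lambda>x. (pp + qq * x) * v x) integrable_on {a..b}"
    by (intro integrable_continuous_interval continuous_intros)
  have i2: "(\<lambda>x. (pp + qq * x) * J x) integrable_on {a..b}"
    unfolding Jx by (intro integrable_continuous_interval continuous_intros)
  have "((\<lambda>x. (pp + qq * x) * (v x - J x)) has_integral (N2 b - N2 a)) {a..b}"
  proof (rule ftc_real[OF hab])
    fix x
    show "(N2 has_real_derivative (pp + qq * x) * (v x - J x)) (at x)"
      unfolding N2_def by (auto intro!: derivative_eq_intros d1 d2 F0d simp: Jx algebra_simps)
  qed
  then have "integral {a..b} (\<lambda>x. (pp + qq * x) * v x) - integral {a..b} (\<lambda>x. (pp + qq * x) * J x) = N2 b - N2 a"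
    using integral_diff[OF i1 i2] by (simp add: integral_unique algebra_simps right_diff_distrib)
  with weighted[OF hab hrho] show ?thesis
    by (simp add: N2_def Phi_def Psi_def algebra_simps)
qed

lemma Phi_const: "Phi a = Phi b"
proof -
  have *: "Phi a = Phi b" if "a < b" for a b
  proof -
    have 1: "(b + (-1) * b) * Phi b - (-1) * Psi b = (b + (-1) * a) * Phi a - (-1) * Psi a"
      by (rule ident) (use that in auto)
    have 2: "(-a + 1 * b) * Phi b - 1 * Psi b = (-a + 1 * a) * Phi a - 1 * Psi a"
      by (rule ident) (use that in auto)
    from 1 2 have "(b - a) * Phi a = (b - a) * Phi b" by (simp add: algebra_simps)
    then show ?thesis using that by simp
  qed
  show ?thesis by (cases a b rule: linorder_cases) (auto dest: *)
qed

lemma Psi_lin: "a \<le> b \<Longrightarrow> Psi b - Psi a = (b - a) * Phi 0"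
proof -
  assume hab: "a \<le> b"
  have 1: "(b + (-1) * b) * Phi b - (-1) * Psi b = (b + (-1) * a) * Phi a - (-1) * Psi a"
    by (rule ident) (use hab in auto)
  then show ?thesis using Phi_const[of a 0] by (simp add: algebra_simps)
qed


lemma Lb_small:
  assumes R: "0 < R" and eta: "0 \<le> eta" and win: "\<And>u. y - R \<le> u \<Longrightarrow> u \<le> y + R \<Longrightarrow> f u - m \<le> eta"
  shows "Lb y \<le> 2 * (16 * K * eta + 216 * S / R)"
proof -
  define C0 where "C0 = 16 * K * eta + 216 * S / R"
  have pt: "exp (-t) * Lm t y \<le> C0 * exp (- t / 2)" if t: "0 \<le> t" for t
  proof -
    have "Lm t y \<le> K * eta * t^2 + S * t^3 / R"
    proof (cases "t \<le> R")
      case True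
      have "Lm t y \<le> (K * eta) * t^2"
      proof (rule Lm_bounds(2)[OF t])
        fix u assume "y - t \<le> u" "u \<le> y + t"
        then have "f u - m \<le> eta" using win True by auto
        then have "K * (f u - m) \<le> K * eta" by (rule mult_left_mono) (use K_pos in auto)
        then show "v u \<le> K * eta" using v_le_Kg[of u] by linarith
      qed
      moreover have "0 \<le> S * t^3 / R" using S_pos R t by simp
      ultimately show ?thesis by linarith
    next
      case False
      have "Lm t y \<le> S * t^2" by (rule Lm_bounds(2)[OF t]) (use v_le_S in auto)
      also have "S * t^2 = S * t^2 * R / R" using R by simp
      also have "\<dots> \<le> S * t^2 * t / R" using False S_pos R t
        by (intro divide_right_mono mult_left_mono) auto
      also have "\<dots> = S * t^3 / R" by (simp add: power3_eq_cube power2_eq_square)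
      finally have "Lm t y \<le> S * t^3 / R" .
      moreover have "0 \<le> K * eta * t^2" using K_pos eta by simp
      ultimately show ?thesis by linarith
    qed
    also have "\<dots> \<le> K * eta * (16 * exp (t/2)) + S / R * (216 * exp (t/2))"
      using poly_exp(2,3)[OF t] K_pos eta S_pos R
      by (intro add_mono mult_left_mono) (auto simp: divide_simps mult.commute)
    finally have "exp (-t) * Lm t y \<le> exp (-t) * (K * eta * (16 * exp (t/2)) + S / R * (216 * exp (t/2)))"
      by (simp add: mult_left_mono)
    also have "\<dots> = C0 * (exp (-t) * exp (t/2))" by (simp add: C0_def algebra_simps)
    also have "exp (-t) * exp (t/2) = exp (- t / 2)" by (simp add: exp_add[symmetric])
    finally show ?thesis .
  qed
  have "Lb y \<le> integral {0..} (\<lambda>t. C0 * exp (- t / 2))"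
    unfolding Lb_def by (rule integral_le[OF Lm_int]) (use exp_half_has_integral pt in auto)
  also have "\<dots> = 2 * C0" using exp_half_has_integral by (rule integral_unique)
  finally show ?thesis by (simp add: C0_def)
qed


lemma good_point:
  assumes lim: "\<And>\<delta> N. \<delta> > 0 \<Longrightarrow> \<exists>Y\<ge>N. f Y - m < \<delta>"
    and eps: "0 < \<epsilon>"
  shows "\<exists>Y\<ge>N. (f Y - m) + Lb Y \<le> \<epsilon> \<and> (f (Y+1) - m) + Lb (Y+1) \<le> \<epsilon> \<and> (\<forall>s. Y \<le> s \<longrightarrow> s \<le> Y + 1 \<longrightarrow> f s - m \<le> \<epsilon>)"
proof -
  define R where "R = 1296 * S / \<epsilon>"
  have R: "0 < R" using S_pos eps by (simp add: R_def)
  define eta where "eta = \<epsilon> / (3 * (1 + 32 * K))"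
  have eta: "0 < eta" using eps K_pos by (simp add: eta_def)
  have eta_eq: "eta * (1 + 32 * K) = \<epsilon> / 3" using K_pos by (simp add: eta_def field_simps)
  define R' where "R' = R + 1"
  define A where "A = R' * exp (mu_p * R')"
  have A: "0 \<le> A" using R by (simp add: A_def R'_def)
  define B where "B = 1 + A * (sqrt (8 * S) + mu_p)"
  have B: "0 < B" using A mu_facts S_pos by (simp add: B_def add_pos_nonneg)
  define z0 where "z0 = min 1 (eta / B)"
  have z0: "0 < z0" "z0 \<le> 1" "z0 * B \<le> eta" using eta B by (auto simp: z0_def min_def field_simps)
  obtain Y where Y: "Y \<ge> N + R'" "f Y - m < z0^2" using lim[of "z0^2" "N + R'"] z0 by auto
  have "z0 * z0 \<le> 1 * z0" by (rule mult_right_mono) (use z0 in auto)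
  then have z2: "z0^2 \<le> z0" by (simp add: power2_eq_square)
  have gY: "0 \<le> f Y - m" "f Y - m \<le> z0" using m_le[of Y] Y z2 by auto
  have "8 * S * (f Y - m) \<le> 8 * S * z0^2" using Y S_pos by (intro mult_left_mono) auto
  then have "f' Y ^ 2 \<le> 8 * S * z0^2" using deriv_small[of Y] by linarith
  then have "sqrt (f' Y ^ 2) \<le> sqrt (8 * S * z0^2)" by (rule real_sqrt_le_mono)
  then have f'Y: "\<bar>f' Y\<bar> \<le> sqrt (8 * S) * z0" using z0 by (simp add: real_sqrt_mult)
  have win: "f y - m \<le> eta" if "Y - R' \<le> y" "y \<le> Y + R'" for y
  proof -
    have "f y - m \<le> (f Y - m) + R' * exp (mu_p * R') * (\<bar>f' Y\<bar> + mu_p * (f Y - m))"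
      by (rule window) (use R that in \<open>auto simp: R'_def\<close>)
    also have "\<dots> \<le> z0 + A * (sqrt (8 * S) * z0 + mu_p * z0)"
      unfolding A_def[symmetric] using gY f'Y A mu_facts
      by (intro add_mono mult_left_mono) auto
    also have "\<dots> = z0 * B" by (simp add: B_def algebra_simps)
    finally show ?thesis using z0 by linarith
  qed
  have Lb1: "Lb Y \<le> 2 * (16 * K * eta + 216 * S / R)"
    by (rule Lb_small[OF R]) (use eta win in \<open>auto simp: R'_def\<close>)
  have Lb2: "Lb (Y+1) \<le> 2 * (16 * K * eta + 216 * S / R)"
    by (rule Lb_small[OF R]) (use eta win in \<open>auto simp: R'_def\<close>)
  have Rb: "2 * (216 * S / R) = \<epsilon> / 3" using S_pos eps by (simp add: R_def field_simps)
  have "eta * 1 \<le> eta * (1 + 32 * K)" using eta K_pos by (intro mult_left_mono) auto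
  then have e3: "eta \<le> \<epsilon>" using eta_eq eps by linarith
  have "f Y - m \<le> eta" "f (Y+1) - m \<le> eta" using win R by (auto simp: R'_def)
  then have "(f Y - m) + Lb Y \<le> \<epsilon>" "(f (Y+1) - m) + Lb (Y+1) \<le> \<epsilon>"
    using Lb1 Lb2 Rb eta_eq eps by (auto simp: algebra_simps)
  moreover have "\<forall>s. Y \<le> s \<longrightarrow> s \<le> Y + 1 \<longrightarrow> f s - m \<le> \<epsilon>"
  proof (intro allI impI)
    fix s assume "Y \<le> s" "s \<le> Y + 1"
    then have "f s - m \<le> eta" by (intro win) (use R in \<open>auto simp: R'_def\<close>)
    then show "f s - m \<le> \<epsilon>" using e3 by linarith
  qed
  moreover have "Y \<ge> N" using Y R by (simp add: R'_def)
  ultimately show ?thesis by blast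
qed


lemma F0_lower: "a \<le> b \<Longrightarrow> m * (b - a) \<le> F0 b - F0 a"
proof -
  assume hab: "a \<le> b"
  have "F0 a - m * a \<le> F0 b - m * b"
    by (rule mono_deriv[OF hab, where h'="\<lambda>x. f x - m"]) (auto intro!: derivative_eq_intros F0d simp: m_le)
  then show ?thesis by (simp add: algebra_simps)
qed

lemma F0_upper: "a \<le> b \<Longrightarrow> (\<And>s. a \<le> s \<Longrightarrow> s \<le> b \<Longrightarrow> f s \<le> B) \<Longrightarrow> F0 b - F0 a \<le> B * (b - a)"
proof -
  assume hab: "a \<le> b" and fb: "\<And>s. a \<le> s \<Longrightarrow> s \<le> b \<Longrightarrow> f s \<le> B"
  have "F0 b - B * b \<le> F0 a - B * a"
    by (rule mono_deriv_neg[OF hab, where h'="\<lambda>x. f x - B"]) (auto intro!: derivative_eq_intros F0d dest: fb)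
  then show ?thesis by (simp add: algebra_simps)
qed

lemma const_f:
  assumes lim: "\<And>\<delta> N. \<delta> > 0 \<Longrightarrow> \<exists>Y\<ge>N. f Y - m < \<delta>"
  shows "f y = m"
proof -
  define C where "C = Phi 0"
  define Q where "Q x = (f x - m) + Lb x" for x
  have Q0: "0 \<le> Q x" for x using m_le[of x] Lb_nonneg[of x] by (simp add: Q_def)
  have Qlin: "Q b - Q a = (b - a) * C + c * (F0 b - F0 a)" if "a \<le> b" for a b
    using Psi_lin[OF that] by (simp add: Psi_def Q_def C_def algebra_simps)
  have Cm: "0 \<le> C + c * m"
  proof (rule ccontr)
    assume neg: "\<not> 0 \<le> C + c * m"
    define \<epsilon> where "\<epsilon> = - (C + c * m) / (2 * (1 + c))"
    have eps: "0 < \<epsilon>" using neg c_pos by (simp add: \<epsilon>_def divide_pos_pos)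
    obtain Y where Y: "(f Y - m) + Lb Y \<le> \<epsilon>" "(f (Y+1) - m) + Lb (Y+1) \<le> \<epsilon>"
        "\<forall>s. Y \<le> s \<longrightarrow> s \<le> Y + 1 \<longrightarrow> f s - m \<le> \<epsilon>"
      using good_point[OF lim eps, of 0] by blast
    have "F0 (Y+1) - F0 Y \<le> (m + \<epsilon>) * ((Y+1) - Y)"
      by (rule F0_upper) (use Y(3) in auto)
    then have F: "F0 (Y+1) - F0 Y \<le> m + \<epsilon>" by simp
    have "Q (Y+1) - Q Y = C + c * (F0 (Y+1) - F0 Y)" using Qlin[of Y "Y+1"] by simp
    also have "\<dots> \<le> C + c * (m + \<epsilon>)" using F c_pos by (simp add: mult_left_mono)
    finally have "Q (Y+1) - Q Y \<le> C + c * m + c * \<epsilon>" by (simp add: algebra_simps)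
    moreover have "Q Y \<le> \<epsilon>" using Y(1) by (simp add: Q_def)
    moreover have "0 \<le> Q (Y+1)" by (rule Q0)
    ultimately have h: "0 \<le> C + c * m + (1 + c) * \<epsilon>" by (simp add: algebra_simps)
    have e: "(1 + c) * \<epsilon> = - (C + c * m) / 2" using c_pos by (simp add: \<epsilon>_def field_simps)
    from h have "0 \<le> C + c * m + (- (C + c * m) / 2)" unfolding e .
    also have "C + c * m + (- (C + c * m) / 2) = (C + c * m) / 2" by (simp add: field_simps)
    finally show False using neg by simp
  qed
  have "Q y \<le> \<epsilon>" if eps: "0 < \<epsilon>" for \<epsilon>
  proof -
    obtain Y where Y: "Y \<ge> y" "(f Y - m) + Lb Y \<le> \<epsilon>"
      using good_point[OF lim eps, of y] by blast
    have "Q Y - Q y = (Y - y) * C + c * (F0 Y - F0 y)" using Qlin[OF Y(1)] .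
    also have "\<dots> \<ge> (Y - y) * C + c * (m * (Y - y))"
      using F0_lower[OF Y(1)] c_pos by (simp add: mult_left_mono)
    finally have "Q Y - Q y \<ge> (Y - y) * (C + c * m)"
      by (simp add: algebra_simps)
    moreover have "(Y - y) * (C + c * m) \<ge> 0" using Cm Y(1) by simp
    ultimately have "Q y \<le> Q Y" by (simp add: algebra_simps)
    then show ?thesis using Y(2) by (simp add: Q_def)
  qed
  then have "Q y \<le> 0" by (meson dense not_le)
  then have "f y \<le> m" using Lb_nonneg[of y] by (simp add: Q_def)
  then show ?thesis using m_le[of y] by simp
qed

end

theorem lemma3p3:
  fixes f f' f'' :: "real \<Rightarrow> real" and c lam T_M :: real
  assumes c_pos: "c > 0"
    and lam: "0 < lam" "lam \<le> T_M"
    and d1: "\<And>y. (f has_real_derivative f' y) (at y)"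
    and d2: "\<And>y. (f' has_real_derivative f'' y) (at y)"
    and cont2: "continuous_on UNIV f''"
    and eq: "\<And>y. f'' y - c * f' y - (f y) ^ 4
                 = - integral UNIV (\<lambda>\<eta>. E (y - \<eta>) * (f \<eta>) ^ 4)"
    and bounds: "\<And>y. lam \<le> f y \<and> f y \<le> T_M"
  shows "(\<exists>C. \<forall>y. f y = C) \<or>
         Liminf at_top (\<lambda>y. ereal (f y)) > ereal (Inf (range f))"
proof -
  interpret L: L3 f f' f'' c lam T_M
    by (rule L3.intro) (use c_pos lam d1 d2 cont2 eq bounds in auto)
  show ?thesis
  proof (cases "Liminf at_top (\<lambda>y. ereal (f y)) > ereal (Inf (range f))")
    case True then show ?thesis by blast
  next
    case False
    then have le: "Liminf at_top (\<lambda>y. ereal (f y)) \<le> ereal L.m" by (simp add: L.m_def not_less)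
    have lim: "\<exists>Y\<ge>N. f Y - L.m < \<delta>" if dpos: "\<delta> > 0" for \<delta> N
    proof (rule ccontr)
      assume "\<not> (\<exists>Y\<ge>N. f Y - L.m < \<delta>)"
      then have ev: "\<And>Y. Y \<ge> N \<Longrightarrow> L.m + \<delta> \<le> f Y" by force
      have "ereal (L.m + \<delta>) \<le> Liminf at_top (\<lambda>y. ereal (f y))"
        unfolding le_Liminf_iff
      proof (intro allI impI)
        fix z assume z: "z < ereal (L.m + \<delta>)"
        show "\<forall>\<^sub>F x in at_top. z < ereal (f x)"
          unfolding eventually_at_top_linorder
        proof (intro exI[of _ N] allI impI)
          fix x assume "N \<le> x"
          then have "ereal (L.m + \<delta>) \<le> ereal (f x)" using ev by simp
          then show "z < ereal (f x)" using z by (rule order_less_le_trans[rotated])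
        qed
      qed
      then have "ereal (L.m + \<delta>) \<le> ereal L.m" using le by (rule order_trans)
      then show False using dpos by simp
    qed
    have "\<forall>y. f y = L.m" using L.const_f lim by blast
    then show ?thesis by blast
  qed
qed

end
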